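(* Let $P$ be an enhanced Gelfand--Zetlin pattern with top row $\lambda$, viewed as a graph whose vertices are its entries and whose edges are its edges. Then: (1) two entries of row $0$ belong to the same connected component if and only if they have the same value; (2) each connected component either has a unique highest vertex (a unique vertex in its row of smallest index) or contains at least one entry of row $0$; (3) all vertices of a connected component, possibly except the highest one, are encircled; in particular, the number of connected components is at least the number of distinct values among $\lambda_1,\dots,\lambda_n$ plus the number of non-encircled entries.
   Context: Let $\lambda=(\lambda_1\ge\dots\ge\lambda_n)$ be a partition. A GZ pattern with top row $\lambda$ is an integer array $a_{ij}$, $0\le i\le n-1$, $1\le j\le n-i$ (row $0$ is the top row), with $a_{0j}=\lambda_{n+1-j}$ and $a_{i-1,j}\le a_{ij}\le a_{i-1,j+1}$ ($a_{ij}$ sits below $a_{i-1,j}$ and $a_{i-1,j+1}$). An enhanced GZ pattern is such an array with a set of encircled entries and a set of edges, each joining an $a_{ij}$ ($i\ge1$) with $a_{i-1,j}$ or $a_{i-1,j+1}$, such that: (1) row $0$ entries are encircled; (2) entries joined by an edge are equal and the lower one is encircled; (3) for $i\ge1$, $1\le j\le n-i-1$: both $a_{ij},a_{i,j+1}$ are joined to $a_{i-1,j+1}$ iff both are joined to $a_{i+1,j}$; (4) if $a_{0j}=a_{0,j+1}$ then $a_{1j}$ is encircled and joined to both; (5) if $a_{i-1,j}<a_{i-1,j+1}$ and $a_{ij}=a_{i-1,j}$, then $a_{ij}$ is encircled and joined to $a_{i-1,j}$; (6) if $a_{i-1,j}<a_{i-1,j+1}$, $a_{ij}=a_{i-1,j+1}$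 and $a_{ij}$ is encircled, then it is joined to $a_{i-1,j+1}$; (7) if $a_{i-1,j}=a_{i-1,j+1}=a_{ij}$ and $a_{i-1,j},a_{i-1,j+1}$ can be connected by a path of edges, then $a_{ij}$ is encircled and joined to both; (8) if $a_{i-1,j}=a_{i-1,j+1}=a_{ij}$ and $a_{ij}$ is encircled, then it is joined to at least one of them. *)

theory Defs
  imports Main
begin

text \<open>Entries of a GZ pattern of size n are indexed by pairs (i,j) with
  row 0 <= i <= n-1 (row 0 is the top row) and position 1 <= j <= n-i.
  The pattern is a function a :: nat \<times> nat \<Rightarrow> int (values off the
  index set are irrelevant).\<close>

definition gz_vertices :: "nat \<Rightarrow> (nat \<times> nat) set" where
  "gz_vertices n = {(i, j). i < n \<and> 1 \<le> j \<and> j \<le> n - i}"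

definition is_partition :: "nat \<Rightarrow> (nat \<Rightarrow> int) \<Rightarrow> bool" where
  "is_partition n lam \<longleftrightarrow>
     (\<forall>k. 1 \<le> k \<and> k < n \<longrightarrow> lam (k + 1) \<le> lam k) \<and>
     (\<forall>k. 1 \<le> k \<and> k \<le> n \<longrightarrow> 0 \<le> lam k)"

definition gz_pattern :: "nat \<Rightarrow> (nat \<Rightarrow> int) \<Rightarrow> (nat \<times> nat \<Rightarrow> int) \<Rightarrow> bool" where
  "gz_pattern n lam a \<longleftrightarrow>
     (\<forall>j. 1 \<le> j \<and> j \<le> n \<longrightarrow> a (0, j) = lam (n + 1 - j)) \<and>
     (\<forall>i j. (i, j) \<in> gz_vertices n \<and> 1 \<le> i \<longrightarrow>
        a (i - 1, j) \<le> a (i, j) \<and> a (i, j) \<le> a (i - 1, j + 1))"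

text \<open>Edges are stored as pairs (lower entry, upper entry). The graph relation
  of the pattern: two entries are joined by a path of edges.\<close>

definition gz_connected :: "((nat \<times> nat) \<times> (nat \<times> nat)) set \<Rightarrow> nat \<times> nat \<Rightarrow> nat \<times> nat \<Rightarrow> bool" where
  "gz_connected E u v \<longleftrightarrow> (u, v) \<in> (E \<union> E\<inverse>)\<^sup>*"

definition enhanced_gz ::
  "nat \<Rightarrow> (nat \<Rightarrow> int) \<Rightarrow> (nat \<times> nat \<Rightarrow> int) \<Rightarrow> (nat \<times> nat) set
     \<Rightarrow> ((nat \<times> nat) \<times> (nat \<times> nat)) set \<Rightarrow> bool" where
  "enhanced_gz n lam a C E \<longleftrightarrow>
     gz_pattern n lam a \<and>
     C \<subseteq> gz_vertices n \<and>
     E \<subseteq> {((i, j), (i', j')). (i, j) \<in> gz_vertices n \<and> 1 \<le> i \<and> i' = i - 1 \<and> (j' = j \<or> j' = j + 1)} \<and>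
     \<comment> \<open>(1)\<close>
     (\<forall>j. 1 \<le> j \<and> j \<le> n \<longrightarrow> (0, j) \<in> C) \<and>
     \<comment> \<open>(2)\<close>
     (\<forall>p q. (p, q) \<in> E \<longrightarrow> a p = a q \<and> p \<in> C) \<and>
     \<comment> \<open>(3)\<close>
     (\<forall>i j. 1 \<le> i \<and> 1 \<le> j \<and> j + 1 \<le> n - i \<longrightarrow>
        ((((i, j), (i - 1, j + 1)) \<in> E \<and> ((i, j + 1), (i - 1, j + 1)) \<in> E) \<longleftrightarrow>
         (((i + 1, j), (i, j)) \<in> E \<and> ((i + 1, j), (i, j + 1)) \<in> E))) \<and>
     \<comment> \<open>(4)\<close>
     (\<forall>j. 1 \<le> j \<and> j + 1 \<le> n \<and> a (0, j) = a (0, j + 1) \<longrightarrow>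
        (1, j) \<in> C \<and> ((1, j), (0, j)) \<in> E \<and> ((1, j), (0, j + 1)) \<in> E) \<and>
     \<comment> \<open>(5)\<close>
     (\<forall>i j. (i, j) \<in> gz_vertices n \<and> 1 \<le> i \<and> a (i - 1, j) < a (i - 1, j + 1) \<and> a (i, j) = a (i - 1, j) \<longrightarrow>
        (i, j) \<in> C \<and> ((i, j), (i - 1, j)) \<in> E) \<and>
     \<comment> \<open>(6)\<close>
     (\<forall>i j. (i, j) \<in> gz_vertices n \<and> 1 \<le> i \<and> a (i - 1, j) < a (i - 1, j + 1) \<and> a (i, j) = a (i - 1, j + 1)
          \<and> (i, j) \<in> C \<longrightarrow> ((i, j), (i - 1, j + 1)) \<in> E) \<and>
     \<comment> \<open>(7)\<close>
     (\<forall>i j. (i, j) \<in> gz_vertices n \<and> 1 \<le> i \<and> a (i - 1, j) = a (i - 1, j + 1) \<and> a (i, j) = a (i - 1, j)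
          \<and> gz_connected E (i - 1, j) (i - 1, j + 1) \<longrightarrow>
        (i, j) \<in> C \<and> ((i, j), (i - 1, j)) \<in> E \<and> ((i, j), (i - 1, j + 1)) \<in> E) \<and>
     \<comment> \<open>(8)\<close>
     (\<forall>i j. (i, j) \<in> gz_vertices n \<and> 1 \<le> i \<and> a (i - 1, j) = a (i - 1, j + 1) \<and> a (i, j) = a (i - 1, j)
          \<and> (i, j) \<in> C \<longrightarrow>
        ((i, j), (i - 1, j)) \<in> E \<or> ((i, j), (i - 1, j + 1)) \<in> E)"

definition gz_components :: "nat \<Rightarrow> ((nat \<times> nat) \<times> (nat \<times> nat)) set \<Rightarrow> (nat \<times> nat) set set" where
  "gz_components n E = gz_vertices n // {(u, v). u \<in> gz_vertices n \<and> v \<in> gz_vertices n \<and> gz_connected E u v}"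

end

theory Submission
  imports Defs
begin

lemma enh_E:
  assumes "enhanced_gz n lam a C E"
  shows "E \<subseteq> {((i, j), (i', j')). (i, j) \<in> gz_vertices n \<and> 1 \<le> i \<and> i' = i - 1 \<and> (j' = j \<or> j' = j + 1)}"
  using assms unfolding enhanced_gz_def by (elim conjE) assumption

lemma enh_2:
  assumes "enhanced_gz n lam a C E"
  shows  "\<forall>p q. (p, q) \<in> E \<longrightarrow> a p = a q \<and> p \<in> C"
  using assms unfolding enhanced_gz_def by (elim conjE) assumption

lemma enh_3:
  assumes "enhanced_gz n lam a C E"
  shows "\<forall>i j. 1 \<le> i \<and> 1 \<le> j \<and> j + 1 \<le> n - i \<longrightarrow>
        ((((i, j), (i - 1, j + 1)) \<in> E \<and> ((i, j + 1), (i - 1, j + 1)) \<in> E) \<longleftrightarrow>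
         (((i + 1, j), (i, j)) \<in> E \<and> ((i + 1, j), (i, j + 1)) \<in> E))"
  using assms unfolding enhanced_gz_def by (elim conjE) assumption

lemma enh_4:
  assumes "enhanced_gz n lam a C E"
  shows "\<forall>j. 1 \<le> j \<and> j + 1 \<le> n \<and> a (0, j) = a (0, j + 1) \<longrightarrow>
        (1, j) \<in> C \<and> ((1, j), (0, j)) \<in> E \<and> ((1, j), (0, j + 1)) \<in> E"
  using assms unfolding enhanced_gz_def by (elim conjE) assumption

lemma enh_1:
  assumes "enhanced_gz n lam a C E"
  shows "\<forall>j. 1 \<le> j \<and> j \<le> n \<longrightarrow> (0, j) \<in> C"
  using assms unfolding enhanced_gz_def by (elim conjE) assumption

lemma enh_gz:
  assumes "enhanced_gz n lam a C E"
  shows "gz_pattern n lam a"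
  using assms unfolding enhanced_gz_def by (elim conjE) assumption

lemma edgeD:
  assumes "enhanced_gz n lam a C E" "(p, q) \<in> E"
  shows "p \<in> gz_vertices n \<and> q \<in> gz_vertices n \<and> 1 \<le> fst p \<and> fst q = fst p - 1 \<and> (snd q = snd p \<or> snd q = snd p + 1) \<and> a p = a q \<and> p \<in> C"
proof -
  obtain i j i' j' where pq: "p = (i, j)" "q = (i', j')" "(i, j) \<in> gz_vertices n" "1 \<le> i" "i' = i - 1" "j' = j \<or> j' = j + 1"
    using enh_E[OF assms(1)] assms(2) by blast
  have "q \<in> gz_vertices n" using pq(2-6) unfolding gz_vertices_def by auto
  then show ?thesis using pq enh_2[OF assms(1)] assms(2) by auto
qed

lemma cond3:
  assumes "enhanced_gz n lam a C E" "1 \<le> i" "1 \<le> j" "j + 1 \<le> n - i"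
    "((i + 1, j), (i, j)) \<in> E" "((i + 1, j), (i, j + 1)) \<in> E"
  shows "((i, j), (i - 1, j + 1)) \<in> E \<and> ((i, j + 1), (i - 1, j + 1)) \<in> E"
  using enh_3[OF assms(1)] assms(2-6) by blast

lemma cond4:
  assumes "enhanced_gz n lam a C E" "1 \<le> j" "j + 1 \<le> n" "a (0, j) = a (0, j + 1)"
  shows "((1, j), (0, j)) \<in> E \<and> ((1, j), (0, j + 1)) \<in> E"
  using enh_4[OF assms(1)] assms(2-4) by blast

lemma top_in_C:
  assumes "enhanced_gz n lam a C E" "1 \<le> j" "j \<le> n"
  shows "(0, j) \<in> C"
  using enh_1[OF assms(1)] assms(2,3) by blast

lemma top_val:
  assumes "enhanced_gz n lam a C E" "1 \<le> j" "j \<le> n"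
  shows "a (0, j) = lam (n + 1 - j)"
  using enh_gz[OF assms(1)] assms(2,3) unfolding gz_pattern_def by blast

lemma desc_row:
  assumes "enhanced_gz n lam a C E" "(u, v) \<in> E\<^sup>*"
  shows "fst v \<le> fst u \<and> (fst u = fst v \<longrightarrow> u = v)"
  using assms(2)
proof (induction rule: rtrancl_induct)
  case base then show ?case by simp
next
  case (step y z)
  from edgeD[OF assms(1) step(2)] have "fst z < fst y" by auto
  with step(3) show ?case by auto
qed

lemma closed_up:
  assumes enh: "enhanced_gz n lam a C E" and v1: "1 \<le> fst v" and noup: "\<forall>x. (v, x) \<notin> E"
  shows "\<forall>u u'. fst u = r \<longrightarrow> (u, v) \<in> E\<^sup>* \<longrightarrow> (u, u') \<in> E \<longrightarrow> (u', v) \<in> E\<^sup>*"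
proof (induction r rule: less_induct)
  case (less r)
  show ?case
  proof (intro allI impI)
    fix u u'
    assume r: "fst u = r" and uv: "(u, v) \<in> E\<^sup>*" and uu': "(u, u') \<in> E"
    show "(u', v) \<in> E\<^sup>*"
    proof (cases "u = v")
      case True then show ?thesis using noup uu' by blast
    next
      case False
      then obtain p where up: "(u, p) \<in> E" and pv: "(p, v) \<in> E\<^sup>*"
        using uv by (metis converse_rtranclE)
      show ?thesis
      proof (cases "p = u'")
        case True then show ?thesis using pv by simp
      next
        case False
        have ep: "u \<in> gz_vertices n \<and> 1 \<le> fst u \<and> fst p = fst u - 1 \<and> (snd p = snd u \<or> snd p = snd u + 1)"
          using edgeD[OF enh up] by blast
        have eu': "fst u' = fst u - 1 \<and> (snd u' = snd u \<or> snd u' = snd u + 1)"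
          using edgeD[OF enh uu'] by blast
        define i where "i = fst u - 1"
        define j where "j = snd u"
        have ui: "u = (i + 1, j)" using ep i_def j_def by (cases u) auto
        have pi1: "fst p \<ge> 1" using desc_row[OF enh pv] v1 by linarith
        have i1: "1 \<le> i" using pi1 ep i_def by simp
        have vert: "i + 1 < n \<and> 1 \<le> j \<and> j \<le> n - (i + 1)"
          using ep ui unfolding gz_vertices_def by auto
        have pu': "(p = (i, j) \<and> u' = (i, j + 1)) \<or> (p = (i, j + 1) \<and> u' = (i, j))"
          using ep eu' False i_def j_def by (cases p; cases u'; auto)
        have both: "((i + 1, j), (i, j)) \<in> E" "((i + 1, j), (i, j + 1)) \<in> E"
          using pu' up uu' ui by auto
        have c3: "((i, j), (i - 1, j + 1)) \<in> E \<and> ((i, j + 1), (i - 1, j + 1)) \<in> E"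
          using cond3[OF enh i1 _ _ both] vert by auto
        define z where "z = (i - 1, j + 1)"
        have pz: "(p, z) \<in> E" and u'z: "(u', z) \<in> E" using c3 pu' z_def by auto
        have "fst p < r" using ep r by simp
        then have "(z, v) \<in> E\<^sup>*" using less pv pz by blast
        then show ?thesis using u'z by (meson converse_rtrancl_into_rtrancl)
      qed
    qed
  qed
qed

lemma conn_desc:
  assumes enh: "enhanced_gz n lam a C E" and v1: "1 \<le> fst v" and noup: "\<forall>x. (v, x) \<notin> E"
    and c: "gz_connected E v u"
  shows "(u, v) \<in> E\<^sup>*"
proof -
  have "(v, u) \<in> (E \<union> E\<inverse>)\<^sup>*" using c unfolding gz_connected_def .
  then show ?thesis
  proof (induction rule: rtrancl_induct)
    case base then show ?case by simp
  next
    case (step y z)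
    show ?case
    proof (cases "(y, z) \<in> E")
      case True then show ?thesis using closed_up[OF enh v1 noup] step(3) by blast
    next
      case False
      then have "(z, y) \<in> E" using step(2) by auto
      then show ?thesis using step(3) by (meson converse_rtrancl_into_rtrancl)
    qed
  qed
qed

lemma conn_val:
  assumes enh: "enhanced_gz n lam a C E" and c: "gz_connected E v u"
  shows "a v = a u"
proof -
  have "(v, u) \<in> (E \<union> E\<inverse>)\<^sup>*" using c unfolding gz_connected_def .
  then show ?thesis
  proof (induction rule: rtrancl_induct)
    case base then show ?case by simp
  next
    case (step y z)
    then show ?case using edgeD[OF enh, of y z] edgeD[OF enh, of z y] by auto
  qed
qed

lemma conn_sym: "gz_connected E u v \<Longrightarrow> gz_connected E v u"
  unfolding gz_connected_def
  by (metis converse_Un converse_converse rtrancl_converseI sup_commute)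

lemma conn_trans: "gz_connected E u v \<Longrightarrow> gz_connected E v w \<Longrightarrow> gz_connected E u w"
  unfolding gz_connected_def by (meson rtrancl_trans)

lemma conn_edge: "(u, v) \<in> E \<Longrightarrow> gz_connected E u v"
  unfolding gz_connected_def by auto

lemma top_mono:
  assumes enh: "enhanced_gz n lam a C E" and p: "is_partition n lam"
  shows "1 \<le> j \<Longrightarrow> j \<le> k \<Longrightarrow> k \<le> n \<Longrightarrow> a (0, j) \<le> a (0, k)"
proof (induction k)
  case 0 then show ?case by simp
next
  case (Suc k)
  show ?case
  proof (cases "j = Suc k")
    case True then show ?thesis by simp
  next
    case False
    then have jk: "j \<le> k" using Suc by simp
    have "a (0, k) = lam (n + 1 - k)" "a (0, Suc k) = lam (n + 1 - Suc k)"
      using top_val[OF enh] Suc jk by auto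
    moreover have "lam (n - k + 1) \<le> lam (n - k)"
      using p Suc jk unfolding is_partition_def by auto
    moreover have "n + 1 - k = n - k + 1" "n + 1 - Suc k = n - k" using Suc by auto
    ultimately have "a (0, k) \<le> a (0, Suc k)" by simp
    then show ?thesis using Suc.IH jk Suc by simp
  qed
qed

lemma top_conn:
  assumes enh: "enhanced_gz n lam a C E" and p: "is_partition n lam"
  shows "1 \<le> j \<Longrightarrow> j \<le> k \<Longrightarrow> k \<le> n \<Longrightarrow> a (0, j) = a (0, k) \<Longrightarrow> gz_connected E (0, j) (0, k)"
proof (induction k)
  case 0 then show ?case by simp
next
  case (Suc k)
  show ?case
  proof (cases "j = Suc k")
    case True then show ?thesis by (simp add: gz_connected_def)
  next
    case False
    then have jk: "j \<le> k" using Suc by simp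
    have "a (0, j) \<le> a (0, k)" using top_mono[OF enh p, of j k] Suc.prems jk by simp
    moreover have "a (0, k) \<le> a (0, Suc k)" using top_mono[OF enh p, of k "Suc k"] Suc.prems jk by simp
    moreover have e: "a (0, j) = a (0, Suc k)" using Suc.prems by simp
    ultimately have eq: "a (0, k) = a (0, k + 1)" "a (0, j) = a (0, k)" by auto
    have c1: "gz_connected E (0, j) (0, k)" using Suc.IH jk Suc eq by simp
    have "((1, k), (0, k)) \<in> E \<and> ((1, k), (0, k + 1)) \<in> E"
      using cond4[OF enh _ _ eq(1)] Suc jk by simp
    then have "gz_connected E (0, k) (0, k + 1)"
      by (meson conn_edge conn_sym conn_trans)
    then show ?thesis using c1 conn_trans by simp
  qed
qed

lemma noup_notC:
  assumes enh: "enhanced_gz n lam a C E" and "v \<notin> C"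
  shows "\<forall>x. (v, x) \<notin> E"
  using edgeD[OF enh] assms(2) by blast

lemma row_pos:
  assumes enh: "enhanced_gz n lam a C E" and "v \<in> gz_vertices n" "v \<notin> C"
  shows "1 \<le> fst v"
proof (rule ccontr)
  assume "\<not> 1 \<le> fst v"
  then have "v = (0, snd v)" by (cases v) auto
  moreover have "1 \<le> snd v \<and> snd v \<le> n" using assms(2) unfolding gz_vertices_def by auto
  ultimately show False using top_in_C[OF enh] assms(3) by metis
qed

lemma finite_V: "finite (gz_vertices n)"
proof -
  have "gz_vertices n \<subseteq> {0..<n} \<times> {0..n}" unfolding gz_vertices_def by auto
  then show ?thesis by (rule finite_subset) auto
qed

lemma refl_conn: "gz_connected E u u" unfolding gz_connected_def by simp

theorem lemma4p1:
  fixes n :: nat and lam :: "nat \<Rightarrow> int" and a :: "nat \<times> nat \<Rightarrow> int"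
    and C :: "(nat \<times> nat) set" and E :: "((nat \<times> nat) \<times> (nat \<times> nat)) set"
  assumes "is_partition n lam"
    and "enhanced_gz n lam a C E"
  shows "(\<forall>j k. 1 \<le> j \<and> j \<le> n \<and> 1 \<le> k \<and> k \<le> n \<longrightarrow>
            (gz_connected E (0, j) (0, k) \<longleftrightarrow> a (0, j) = a (0, k))) \<and>
         (\<forall>K \<in> gz_components n E.
            (\<exists>!w. w \<in> K \<and> (\<forall>u \<in> K. fst w \<le> fst u)) \<or> (\<exists>j. (0, j) \<in> K)) \<and>
         (\<forall>K \<in> gz_components n E. \<forall>v \<in> K. v \<notin> C \<longrightarrow>
            (\<forall>u \<in> K. fst v \<le> fst u \<and> (fst u = fst v \<longrightarrow> u = v))) \<and>
         card (lam ` {1..n}) + card (gz_vertices n - C) \<le> card (gz_components n E)"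
proof -
  note p = assms(1) and enh = assms(2)
  define V where "V = gz_vertices n"
  define R where "R = {(u, v). u \<in> V \<and> v \<in> V \<and> gz_connected E u v}"
  have comps: "gz_components n E = V // R" unfolding gz_components_def V_def R_def by simp
  have mem: "\<And>x u. u \<in> R `` {x} \<longleftrightarrow> x \<in> V \<and> u \<in> V \<and> gz_connected E x u"
    unfolding R_def by auto
  have classE: "\<And>K. K \<in> V // R \<Longrightarrow> \<exists>x \<in> V. K = R `` {x}"
    by (auto elim: quotientE)
  have P1: "\<forall>j k. 1 \<le> j \<and> j \<le> n \<and> 1 \<le> k \<and> k \<le> n \<longrightarrow>
            (gz_connected E (0, j) (0, k) \<longleftrightarrow> a (0, j) = a (0, k))"
  proof (intro allI impI)
    fix j k assume jk: "1 \<le> j \<and> j \<le> n \<and> 1 \<le> k \<and> k \<le> n"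
    show "gz_connected E (0, j) (0, k) \<longleftrightarrow> a (0, j) = a (0, k)"
    proof
      assume "gz_connected E (0, j) (0, k)" then show "a (0, j) = a (0, k)" using conn_val[OF enh] by blast
    next
      assume eq: "a (0, j) = a (0, k)"
      show "gz_connected E (0, j) (0, k)"
      proof (cases "j \<le> k")
        case True then show ?thesis using top_conn[OF enh p] jk eq by blast
      next
        case False then show ?thesis using top_conn[OF enh p, of k j] jk eq conn_sym by force
      qed
    qed
  qed
  have key: "\<And>v u. v \<in> V \<Longrightarrow> 1 \<le> fst v \<Longrightarrow> \<forall>x. (v, x) \<notin> E \<Longrightarrow> gz_connected E v u \<Longrightarrow>
      fst v \<le> fst u \<and> (fst u = fst v \<longrightarrow> u = v)"
    using conn_desc[OF enh] desc_row[OF enh] by blast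
  have P3: "\<forall>K \<in> gz_components n E. \<forall>v \<in> K. v \<notin> C \<longrightarrow>
            (\<forall>u \<in> K. fst v \<le> fst u \<and> (fst u = fst v \<longrightarrow> u = v))"
  proof (intro ballI impI)
    fix K v u assume K: "K \<in> gz_components n E" and v: "v \<in> K" "v \<notin> C" and u: "u \<in> K"
    obtain x where x: "x \<in> V" "K = R `` {x}" using classE K comps by blast
    have vV: "v \<in> V" and xv: "gz_connected E x v" using x(2) v(1) mem by auto
    have xu: "gz_connected E x u" using x(2) u mem by auto
    have cv: "gz_connected E v u" using conn_trans[OF conn_sym[OF xv] xu] .
    show "fst v \<le> fst u \<and> (fst u = fst v \<longrightarrow> u = v)"
      using key[OF vV row_pos[OF enh vV[unfolded V_def] v(2)] noup_notC[OF enh v(2)] cv] .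
  qed
  have P2: "\<forall>K \<in> gz_components n E.
            (\<exists>!w. w \<in> K \<and> (\<forall>u \<in> K. fst w \<le> fst u)) \<or> (\<exists>j. (0, j) \<in> K)"
  proof
    fix K assume K: "K \<in> gz_components n E"
    obtain x where x: "x \<in> V" "K = R `` {x}" using classE K comps by blast
    have xK: "x \<in> K" using x mem refl_conn by blast
    show "(\<exists>!w. w \<in> K \<and> (\<forall>u \<in> K. fst w \<le> fst u)) \<or> (\<exists>j. (0, j) \<in> K)"
    proof (cases "\<exists>j. (0, j) \<in> K")
      case True then show ?thesis by blast
    next
      case False
      define m where "m = (LEAST r. \<exists>w \<in> K. fst w = r)"
      have "\<exists>r. \<exists>w \<in> K. fst w = r" using xK by blast
      then have "\<exists>w \<in> K. fst w = m" unfolding m_def by (rule LeastI_ex)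
      then obtain w where w: "w \<in> K" "fst w = m" by blast
      have wmin: "\<forall>u \<in> K. fst w \<le> fst u"
        using w unfolding m_def by (metis (mono_tags, lifting) Least_le)
      have wV: "w \<in> V" using w x mem by blast
      have w1: "1 \<le> fst w"
      proof (rule ccontr)
        assume "\<not> 1 \<le> fst w"
        then have "w = (0, snd w)" by (cases w) auto
        then show False using False w by metis
      qed
      have noup: "\<forall>y. (w, y) \<notin> E"
      proof (intro allI notI)
        fix y assume wy: "(w, y) \<in> E"
        have "y \<in> V" "fst y < fst w" using edgeD[OF enh wy] V_def by auto
        moreover have "gz_connected E x w" using w(1) x(2) mem by auto
        moreover have "gz_connected E x y" using conn_trans[OF calculation(3) conn_edge[OF wy]] .
        ultimately have "y \<in> K" using x mem by blast
        then show False using wmin \<open>fst y < fst w\<close> by force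
      qed
      have "\<exists>!w. w \<in> K \<and> (\<forall>u \<in> K. fst w \<le> fst u)"
      proof (rule ex1I[of _ w])
        show "w \<in> K \<and> (\<forall>u \<in> K. fst w \<le> fst u)" using w wmin by blast
      next
        fix w' assume w': "w' \<in> K \<and> (\<forall>u \<in> K. fst w' \<le> fst u)"
        have xw: "gz_connected E x w" using w(1) x(2) mem by auto
        have xw': "gz_connected E x w'" using w' x(2) mem by auto
        have "gz_connected E w w'" using conn_trans[OF conn_sym[OF xw] xw'] .
        then have "fst w \<le> fst w' \<and> (fst w' = fst w \<longrightarrow> w' = w)" using key[OF wV w1 noup] by blast
        moreover have "fst w' \<le> fst w" using w' w(1) by blast
        ultimately show "w' = w" by simp
      qed
      then show ?thesis by blast
    qed
  qed
  define A where "A = (\<lambda>j. R `` {(0, j)}) ` {1..n}"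
  define B where "B = (\<lambda>v. R `` {v}) ` (V - C)"
  define \<Phi> where "\<Phi> K = a (SOME w. w \<in> K)" for K :: "(nat \<times> nat) set"
  have topV: "\<And>j. j \<in> {1..n} \<Longrightarrow> (0, j) \<in> V" unfolding V_def gz_vertices_def by auto
  have PhiA: "\<And>j. j \<in> {1..n} \<Longrightarrow> \<Phi> (R `` {(0, j)}) = a (0, j)"
  proof -
    fix j assume j: "j \<in> {1..n}"
    have "(0, j) \<in> R `` {(0, j)}" using mem topV[OF j] refl_conn by blast
    then have "(SOME w. w \<in> R `` {(0, j)}) \<in> R `` {(0, j)}" by (rule someI)
    then have "gz_connected E (0, j) (SOME w. w \<in> R `` {(0, j)})" using mem by auto
    then show "\<Phi> (R `` {(0, j)}) = a (0, j)" unfolding \<Phi>_def using conn_val[OF enh] by metis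
  qed
  have "inj_on \<Phi> A"
  proof (rule inj_onI)
    fix K K' assume "K \<in> A" "K' \<in> A" and eq: "\<Phi> K = \<Phi> K'"
    then obtain j k where j: "j \<in> {1..n}" "K = R `` {(0, j)}" and k: "k \<in> {1..n}" "K' = R `` {(0, k)}"
      unfolding A_def by blast
    have "a (0, j) = a (0, k)" using eq PhiA j k by simp
    then have c: "gz_connected E (0, j) (0, k)" using P1 j k by simp
    show "K = K'" unfolding j k
    proof (rule set_eqI)
      fix u
      show "u \<in> R `` {(0, j)} \<longleftrightarrow> u \<in> R `` {(0, k)}"
        unfolding mem using topV[OF j(1)] topV[OF k(1)] conn_trans[OF c] conn_trans[OF conn_sym[OF c]] by blast
    qed
  qed
  then have cA: "card A = card (\<Phi> ` A)" by (simp add: card_image)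
  have "\<Phi> ` A = (\<lambda>j. a (0, j)) ` {1..n}" unfolding A_def image_image using PhiA by simp
  also have "\<dots> = (\<lambda>j. lam (n + 1 - j)) ` {1..n}" using top_val[OF enh] by (intro image_cong) auto
  also have "\<dots> = lam ` {1..n}"
  proof
    show "(\<lambda>j. lam (n + 1 - j)) ` {1..n} \<subseteq> lam ` {1..n}"
    proof
      fix y assume "y \<in> (\<lambda>j. lam (n + 1 - j)) ` {1..n}"
      then obtain k where k: "k \<in> {1..n}" "y = lam (n + 1 - k)" by blast
      then have "n + 1 - k \<in> {1..n}" by auto
      then show "y \<in> lam ` {1..n}" using k by blast
    qed
  next
    show "lam ` {1..n} \<subseteq> (\<lambda>j. lam (n + 1 - j)) ` {1..n}"
    proof
      fix y assume "y \<in> lam ` {1..n}"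
      then obtain k where k: "k \<in> {1..n}" "y = lam k" by blast
      then have "n + 1 - k \<in> {1..n}" "n + 1 - (n + 1 - k) = k" by auto
      then show "y \<in> (\<lambda>j. lam (n + 1 - j)) ` {1..n}" using k by (metis image_eqI)
    qed
  qed
  finally have cardA: "card A = card (lam ` {1..n})" using cA by simp
  have "inj_on (\<lambda>v. R `` {v}) (V - C)"
  proof (rule inj_onI)
    fix v v' assume v: "v \<in> V - C" and v': "v' \<in> V - C" and eq: "R `` {v} = R `` {v'}"
    have "v' \<in> R `` {v'}" using v' mem refl_conn by blast
    then have "v' \<in> R `` {v}" using eq by simp
    then have c: "gz_connected E v v'" using mem[of v' v] by blast
    have r1: "1 \<le> fst v" "1 \<le> fst v'" using row_pos[OF enh] v v' V_def by auto
    have k1: "fst v \<le> fst v' \<and> (fst v' = fst v \<longrightarrow> v' = v)"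
      using key[OF _ r1(1) noup_notC[OF enh] c] v by blast
    have k2: "fst v' \<le> fst v \<and> (fst v = fst v' \<longrightarrow> v = v')"
      using key[OF _ r1(2) noup_notC[OF enh] conn_sym[OF c]] v' by blast
    show "v = v'" using k1 k2 by auto
  qed
  then have cardB: "card B = card (V - C)" unfolding B_def by (simp add: card_image)
  have disj: "A \<inter> B = {}"
  proof (rule ccontr)
    assume "A \<inter> B \<noteq> {}"
    then obtain j v where j: "j \<in> {1..n}" and v: "v \<in> V - C" and eq: "R `` {(0, j)} = R `` {v}"
      unfolding A_def B_def by blast
    have "v \<in> R `` {v}" using v mem refl_conn by blast
    then have "v \<in> R `` {(0, j)}" using eq by simp
    then have "gz_connected E (0, j) v" using mem[of v "(0, j)"] by blast
    then have c: "gz_connected E v (0, j)" using conn_sym by blast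
    have r1: "1 \<le> fst v" using row_pos[OF enh] v V_def by auto
    show False using key[OF _ r1 noup_notC[OF enh] c] v r1 by simp
  qed
  have sub: "A \<union> B \<subseteq> V // R"
    unfolding A_def B_def using topV by (auto intro: quotientI)
  have finQ: "finite (V // R)"
    by (rule finite_quotient) (auto simp: V_def finite_V R_def)
  have finA: "finite A" "finite B" using finite_subset[OF sub finQ] by auto
  have "card A + card B = card (A \<union> B)" using card_Un_disjoint[OF finA disj] by simp
  also have "\<dots> \<le> card (V // R)" using card_mono[OF finQ sub] .
  finally have P4: "card (lam ` {1..n}) + card (gz_vertices n - C) \<le> card (gz_components n E)"
    using cardA cardB comps V_def by simp
  show ?thesis using P1 P2 P3 P4 by blast
qed

end
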